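(* Fix $\rho\in(0,1)$. For each $n$ let $X=(X_1,\dots,X_n)'$ be jointly normal with $E[X_i]=0$, $E[X_i^2]=1$ and $\operatorname{Corr}(X_i,X_j)=\rho$ for $i\neq j$, and let $M_n(X)=\max(X_1,\dots,X_n)$. Let $\widehat\rho=\widehat\rho_n$ be an estimator (a measurable function of $X$ with values in $[0,1)$) satisfying $\sqrt{2\ln n}\,\big(\sqrt{1-\rho}-\sqrt{1-\widehat\rho}\big)\xrightarrow{P}0$. Then $$\left|\int_{-\infty}^{\infty}\left(\Phi^n\!\left(\frac{x\sqrt{\rho}+M_n(X)}{\sqrt{1-\rho}}\right)-\Phi^n\!\left(\frac{x\sqrt{\widehat\rho}+M_n(X)}{\sqrt{1-\widehat\rho}}\right)\right)\phi(x)\,dx\right|\xrightarrow[n\to\infty]{P}0,$$ so that the one-sided $p$-value $1-\int\Phi^n\big((x\sqrt{r}+M_n(X))/\sqrt{1-r}\big)\phi(x)dx$ evaluated at $r=\widehat\rho$ minus the same quantity at $r=\rho$ converges to $0$ in probability.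
   Context: $\Phi$ and $\phi$ denote the standard normal cumulative distribution function and density; $\Phi^n$ is the $n$-th power of $\Phi$. The correlation $\rho$ does not depend on $n$. *)

theory Defs
  imports "HOL-Probability.Probability"
begin

definition phi :: "real \<Rightarrow> real" where
  "phi x = std_normal_density x"

definition Phi :: "real \<Rightarrow> real" where
  "Phi x = (\<integral>t. indicator {..x} t * std_normal_density t \<partial>lborel)"

definition normal_rv :: "'a measure \<Rightarrow> ('a \<Rightarrow> real) \<Rightarrow> bool" where
  "normal_rv M Y \<longleftrightarrow> Y \<in> borel_measurable M \<and>
     (\<exists>\<mu> \<sigma>. (\<sigma> = 0 \<and> (AE \<omega> in M. Y \<omega> = \<mu>)) \<or>
             (\<sigma> > 0 \<and> distributed M lborel Y (normal_density \<mu> \<sigma>)))"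

definition jointly_normal :: "'a measure \<Rightarrow> nat \<Rightarrow> (nat \<Rightarrow> 'a \<Rightarrow> real) \<Rightarrow> bool" where
  "jointly_normal M n X \<longleftrightarrow>
     (\<forall>a :: nat \<Rightarrow> real. normal_rv M (\<lambda>\<omega>. \<Sum>i<n. a i * X i \<omega>))"

definition conv_prob_zero :: "(nat \<Rightarrow> 'a measure) \<Rightarrow> (nat \<Rightarrow> 'a \<Rightarrow> real) \<Rightarrow> bool" where
  "conv_prob_zero M Y \<longleftrightarrow>
     (\<forall>e>0. (\<lambda>n. measure (M n) {\<omega> \<in> space (M n). \<bar>Y n \<omega>\<bar> > e}) \<longlonglongrightarrow> 0)"

end

theory Submission
  imports Defs
begin

lemma phi_int: "integrable lborel phi"
  unfolding phi_def[abs_def] by simp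

lemma phi_nonneg: "0 \<le> phi x" unfolding phi_def by simp

lemma phi_total: "(\<integral>x. phi x \<partial>lborel) = 1"
proof -
  have "(\<integral>x. std_normal_density x * x^(2*0) \<partial>lborel) = 1"
    using integral_std_normal_moment_even[of 0] by simp
  then show ?thesis unfolding phi_def[abs_def] by simp
qed

lemma phi_le1: "phi x \<le> 1"
proof -
  have a: "exp (- x\<^sup>2 / 2) \<le> 1" by simp
  have b: "1 \<le> sqrt (2 * pi)" using pi_gt3 by (simp add: real_le_rsqrt)
  have "(1 / sqrt (2 * pi)) * exp (- x\<^sup>2 / 2) \<le> 1 * 1"
    apply (rule mult_mono) using a b by (auto simp: divide_le_eq)
  then show ?thesis unfolding phi_def std_normal_density_def by simp
qed

lemma phi_meas[measurable]: "phi \<in> borel_measurable borel"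
  unfolding phi_def[abs_def] by simp

lemma Phi_alt: "Phi x = (\<integral>t. indicator {..x} t * phi t \<partial>lborel)"
  unfolding Phi_def phi_def ..

lemma int_ind_phi: "integrable lborel (\<lambda>t. indicator A t * phi t)" if "A \<in> sets borel"
proof -
  have "A \<in> sets lborel" using that by simp
  from integrable_real_mult_indicator[OF this phi_int] show ?thesis by (simp add: mult.commute)
qed

lemma Phi_nonneg: "0 \<le> Phi x"
  unfolding Phi_alt by (rule integral_nonneg_AE) (auto simp: phi_nonneg)

lemma Phi_le1: "Phi x \<le> 1"
proof -
  have "Phi x \<le> (\<integral>t. phi t \<partial>lborel)" unfolding Phi_alt
    by (rule integral_mono[OF int_ind_phi phi_int]) (auto simp: phi_nonneg indicator_def)
  then show ?thesis using phi_total by simp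
qed

lemma Phi_mono: "a \<le> b \<Longrightarrow> Phi a \<le> Phi b"
  unfolding Phi_alt
  by (rule integral_mono[OF int_ind_phi int_ind_phi]) (auto simp: phi_nonneg indicator_def)

lemma Phi_mono': "mono Phi" using Phi_mono by (auto simp: mono_def)

lemma Phi_meas[measurable]: "Phi \<in> borel_measurable borel"
  using borel_measurable_mono[OF Phi_mono'] .

lemma Phi_lip: assumes "a \<le> b" shows "Phi b - Phi a \<le> b - a"
proof -
  have "Phi b - Phi a = (\<integral>t. indicator {a<..b} t * phi t \<partial>lborel)"
    unfolding Phi_alt
    apply (subst Bochner_Integration.integral_diff[symmetric])
      apply (rule int_ind_phi, simp)
      apply (rule int_ind_phi, simp)
    apply (rule Bochner_Integration.integral_cong)
    using assms by (auto simp: indicator_def)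
  also have "\<dots> \<le> (\<integral>t. indicator {a<..b} t \<partial>lborel)"
  proof (rule integral_mono[OF int_ind_phi])
    show "integrable lborel (indicator {a<..b} :: real \<Rightarrow> real)"
      by (rule integrable_real_indicator) (use assms in auto)
  qed (auto simp: phi_le1 indicator_def)
  also have "\<dots> = b - a" using assms by simp
  finally show ?thesis .
qed

lemma one_minus_Phi: "1 - Phi y = (\<integral>t. (1 - indicator {..y} t) * phi t \<partial>lborel)"
proof -
  have "(\<integral>t. (1 - indicator {..y} t) * phi t \<partial>lborel) = (\<integral>t. phi t - indicator {..y} t * phi t \<partial>lborel)"
    by (simp add: left_diff_distrib)
  also have "\<dots> = (\<integral>t. phi t \<partial>lborel) - Phi y" unfolding Phi_alt
    by (rule Bochner_Integration.integral_diff[OF phi_int int_ind_phi]) simp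
  finally show ?thesis using phi_total by simp
qed

lemma mgf: "(\<integral>x. exp (t * x) * phi x \<partial>lborel) = exp (t\<^sup>2 / 2)"
  and mgf_int: "integrable lborel (\<lambda>x. exp (t * x) * phi x)"
proof -
  have eq: "exp (t * x) * phi x = exp (t\<^sup>2 / 2) * phi (- t + 1 * x)" for x
  proof -
    have "t * x + (- x\<^sup>2 / 2) = t\<^sup>2 / 2 + (- (- t + 1 * x)\<^sup>2 / 2)"
      by (simp add: power2_eq_square field_simps)
    then have "exp (t * x) * exp (- x\<^sup>2 / 2) = exp (t\<^sup>2 / 2) * exp (- (- t + 1 * x)\<^sup>2 / 2)"
      by (metis exp_add)
    then show ?thesis unfolding phi_def std_normal_density_def by (metis mult.left_commute)
  qed
  have i1: "integrable lborel (\<lambda>x. phi (- t + 1 * x))"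
    by (rule lborel_integrable_real_affine[OF phi_int]) simp
  show "integrable lborel (\<lambda>x. exp (t * x) * phi x)" unfolding eq using i1 by simp
  have "(\<integral>x. exp (t * x) * phi x \<partial>lborel) = exp (t\<^sup>2 / 2) * (\<integral>x. phi (- t + 1 * x) \<partial>lborel)"
    unfolding eq by simp
  also have "(\<integral>x. phi (- t + 1 * x) \<partial>lborel) = (\<integral>x. phi x \<partial>lborel)"
    using lborel_integral_real_affine[of 1 phi "-t"] by simp
  finally show "(\<integral>x. exp (t * x) * phi x \<partial>lborel) = exp (t\<^sup>2 / 2)" using phi_total by simp
qed

lemma int_bdd_phi:
  assumes "h \<in> borel_measurable borel" "\<And>x. \<bar>h x\<bar> \<le> 1"
  shows "integrable lborel (\<lambda>x. h x * phi x)"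
proof (rule Bochner_Integration.integrable_bound[OF phi_int])
  show "(\<lambda>x. h x * phi x) \<in> borel_measurable lborel" using assms(1) by simp
  show "AE x in lborel. norm (h x * phi x) \<le> norm (phi x)"
    using assms(2) phi_nonneg by (auto simp: abs_mult intro!: mult_left_le_one_le)
qed

lemma tail_up: assumes "0 \<le> y" shows "1 - Phi y \<le> exp (- y\<^sup>2 / 2)"
proof -
  have "1 - Phi y = (\<integral>t. (1 - indicator {..y} t) * phi t \<partial>lborel)" by (rule one_minus_Phi)
  also have "\<dots> \<le> (\<integral>t. exp (- y\<^sup>2) * (exp (y * t) * phi t) \<partial>lborel)"
  proof (rule integral_mono)
    show "integrable lborel (\<lambda>t. (1 - indicator {..y} t) * phi t)"
      by (rule int_bdd_phi) (auto simp: indicator_def)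
    show "integrable lborel (\<lambda>t. exp (- y\<^sup>2) * (exp (y * t) * phi t))"
      using mgf_int by simp
    fix t
    have "1 - indicator {..y} t \<le> exp (- y\<^sup>2) * exp (y * t)"
    proof (cases "t \<le> y")
      case False
      have "y * y \<le> y * t" using False assms by (intro mult_left_mono) auto
      then have "0 \<le> y * t - y\<^sup>2" by (simp add: power2_eq_square)
      then have "1 \<le> exp (y * t - y\<^sup>2)" by simp
      moreover have "exp (- y\<^sup>2) * exp (y * t) = exp (y * t - y\<^sup>2)" by (subst exp_add[symmetric]) simp
      ultimately show ?thesis using False by simp
    qed simp
    then show "(1 - indicator {..y} t) * phi t \<le> exp (- y\<^sup>2) * (exp (y * t) * phi t)"
      using phi_nonneg[of t] by (metis mult.assoc mult_right_mono)
  qed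
  also have "\<dots> = exp (- y\<^sup>2) * exp (y\<^sup>2 / 2)" using mgf by simp
  also have "\<dots> = exp (- y\<^sup>2 / 2)" by (subst exp_add[symmetric]) simp
  finally show ?thesis .
qed

lemma tail_low: assumes "0 \<le> y" shows "Phi (- y) \<le> exp (- y\<^sup>2 / 2)"
proof -
  have "Phi (- y) \<le> (\<integral>t. exp (- y\<^sup>2) * (exp ((- y) * t) * phi t) \<partial>lborel)"
    unfolding Phi_alt
  proof (rule integral_mono)
    show "integrable lborel (\<lambda>t. indicator {..-y} t * phi t)"
      by (rule int_ind_phi) simp
    show "integrable lborel (\<lambda>t. exp (- y\<^sup>2) * (exp ((-y) * t) * phi t))"
      using mgf_int[of "-y"] by simp
    fix t
    have "indicator {..-y} t \<le> exp (- y\<^sup>2) * exp ((-y) * t)"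
    proof (cases "t \<le> -y")
      case True
      have "y * y \<le> y * (- t)" using True assms by (intro mult_left_mono) auto
      then have "0 \<le> (-y) * t - y\<^sup>2" by (simp add: power2_eq_square)
      then have "1 \<le> exp ((-y) * t - y\<^sup>2)" by simp
      moreover have "exp (- y\<^sup>2) * exp ((-y) * t) = exp ((-y) * t - y\<^sup>2)" by (subst exp_add[symmetric]) simp
      ultimately show ?thesis using True by simp
    qed simp
    then show "indicator {..-y} t * phi t \<le> exp (- y\<^sup>2) * (exp ((-y) * t) * phi t)"
      using phi_nonneg[of t] by (metis mult.assoc mult_right_mono)
  qed
  also have "\<dots> = exp (- y\<^sup>2) * exp (y\<^sup>2 / 2)" using mgf[of "-y"] by simp
  also have "\<dots> = exp (- y\<^sup>2 / 2)" by (subst exp_add[symmetric]) simp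
  finally show ?thesis .
qed

lemma bernoulli_aux: assumes "0 \<le> (a::real)" "a \<le> 1" shows "1 - a ^ n \<le> real n * (1 - a)"
proof (induction n)
  case (Suc n)
  have "a ^ n * (1 - a) \<le> 1 - a" using assms by (simp add: mult_left_le_one_le power_le_one)
  then show ?case using Suc by (simp add: algebra_simps)
qed simp

definition AA :: "real \<Rightarrow> real \<Rightarrow> real \<Rightarrow> real" where
  "AA p m x = (x * sqrt p + m) / sqrt (1 - p)"

lemma Phi_pow_mono: "a \<le> b \<Longrightarrow> Phi a ^ n \<le> Phi b ^ n"
  by (simp add: Phi_mono Phi_nonneg power_mono)

lemma Phi_pow_le1: "Phi a ^ n \<le> 1"
  by (simp add: Phi_le1 Phi_nonneg power_le_one)

lemma Phi_pow_nonneg: "0 \<le> Phi a ^ n"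
  by (simp add: Phi_nonneg)

lemma pointwise:
  assumes p: "0 \<le> p" "p < 1" and q: "0 \<le> q" "q < 1" and B: "0 \<le> B"
    and x: "\<bar>x\<bar> \<le> K" and D: "0 \<le> \<Delta>"
    and cond: "B * \<bar>sqrt (1 - p) - sqrt (1 - q)\<bar> + K * \<bar>sqrt q - sqrt p\<bar> \<le> \<Delta> * sqrt q"
  shows "Phi (AA p m x) ^ n \<le> Phi (AA q m (x + \<Delta>)) ^ n + Phi (- B) ^ n + (1 - Phi B ^ n)"
proof (cases "AA p m x \<le> - B")
  case True
  then have "Phi (AA p m x) ^ n \<le> Phi (- B) ^ n" by (rule Phi_pow_mono)
  then show ?thesis using Phi_pow_nonneg[of "AA q m (x + \<Delta>)" n] Phi_pow_le1[of B n] by linarith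
next
  case False
  define u where "u = min (AA p m x) B"
  define sp where "sp = sqrt (1 - p)"
  define sq where "sq = sqrt (1 - q)"
  have sp: "0 < sp" using p by (simp add: sp_def)
  have sq: "0 < sq" using q by (simp add: sq_def)
  have uB: "\<bar>u\<bar> \<le> B" using False B by (auto simp: u_def)
  have "u \<le> AA p m x" by (simp add: u_def)
  then have h1: "u * sp \<le> x * sqrt p + m" using sp by (simp add: AA_def sp_def pos_le_divide_eq)
  have h2: "\<bar>u * (sp - sq)\<bar> \<le> B * \<bar>sp - sq\<bar>" using uB by (simp add: abs_mult mult_right_mono)
  have h3: "\<bar>x * (sqrt q - sqrt p)\<bar> \<le> K * \<bar>sqrt q - sqrt p\<bar>" using x by (simp add: abs_mult mult_right_mono)
  have h4: "u * (sp - sq) + x * (sqrt q - sqrt p) + \<Delta> * sqrt q \<ge> 0"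
    using h2 h3 cond unfolding sp_def[symmetric] sq_def[symmetric] by linarith
  have "u * sq \<le> (x + \<Delta>) * sqrt q + m" using h1 h4 by (simp add: algebra_simps)
  then have "u \<le> AA q m (x + \<Delta>)" using sq by (simp add: AA_def sq_def pos_le_divide_eq)
  then have g1: "Phi u ^ n \<le> Phi (AA q m (x + \<Delta>)) ^ n" by (rule Phi_pow_mono)
  have g2: "Phi (AA p m x) ^ n \<le> Phi u ^ n + (1 - Phi B ^ n)"
  proof (cases "AA p m x \<le> B")
    case True then show ?thesis using Phi_pow_le1[of B n] by (simp add: u_def)
  next
    case False then show ?thesis using Phi_pow_le1[of "AA p m x" n] by (simp add: u_def)
  qed
  show ?thesis using g1 g2 Phi_pow_nonneg[of "- B" n] by linarith
qed

lemma phi_cmp: "b\<^sup>2 \<le> a\<^sup>2 \<Longrightarrow> phi a \<le> phi b"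
  unfolding phi_def std_normal_density_def by (simp add: divide_right_mono)

lemma shift:
  assumes D: "0 \<le> \<Delta>" and g[measurable]: "g \<in> borel_measurable borel"
    and g01: "\<And>x. 0 \<le> g x" "\<And>x. g x \<le> 1"
  shows "(\<integral>x. g (x + \<Delta>) * phi x \<partial>lborel) \<le> (\<integral>x. g x * phi x \<partial>lborel) + \<Delta>"
proof -
  have ishift: "integrable lborel (\<lambda>x. phi (- \<Delta> + 1 * x))"
    by (rule lborel_integrable_real_affine[OF phi_int]) simp
  have "(\<integral>y. g y * phi (y - \<Delta>) \<partial>lborel) = (\<integral>x. g (\<Delta> + 1 * x) * phi (\<Delta> + 1 * x - \<Delta>) \<partial>lborel)"
    using lborel_integral_real_affine[of 1 "\<lambda>y. g y * phi (y - \<Delta>)" \<Delta>] by simp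
  also have "\<dots> = (\<integral>x. g (x + \<Delta>) * phi x \<partial>lborel)" by (simp add: add.commute)
  finally have e1: "(\<integral>x. g (x + \<Delta>) * phi x \<partial>lborel) = (\<integral>y. g y * phi (y - \<Delta>) \<partial>lborel)" ..
  have i1: "integrable lborel (\<lambda>y. g y * phi (y - \<Delta>))"
  proof (rule Bochner_Integration.integrable_bound[OF ishift])
    show "(\<lambda>y. g y * phi (y - \<Delta>)) \<in> borel_measurable lborel" by simp
    show "AE x in lborel. norm (g x * phi (x - \<Delta>)) \<le> norm (phi (- \<Delta> + 1 * x))"
      using g01 phi_nonneg by (auto simp: abs_mult intro!: mult_left_le_one_le)
  qed
  have i2: "integrable lborel (\<lambda>y. g y * phi y)" by (rule int_bdd_phi) (use g01 in auto)
  have i3: "integrable lborel (\<lambda>y. (1 - indicator {..\<Delta>/2} y) * phi (y - \<Delta>))"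
  proof (rule Bochner_Integration.integrable_bound[OF ishift])
    show "(\<lambda>y. (1 - indicator {..\<Delta>/2} y) * phi (y - \<Delta>)) \<in> borel_measurable lborel" by simp
    show "AE x in lborel. norm ((1 - indicator {..\<Delta>/2} x) * phi (x - \<Delta>)) \<le> norm (phi (- \<Delta> + 1 * x))"
      using phi_nonneg by (auto simp: indicator_def)
  qed
  have i4: "integrable lborel (\<lambda>y. (1 - indicator {..\<Delta>/2} y) * phi y)"
    by (rule int_bdd_phi) (auto simp: indicator_def)
  have "(\<integral>y. g y * phi (y - \<Delta>) \<partial>lborel) \<le>
        (\<integral>y. g y * phi y + ((1 - indicator {..\<Delta>/2} y) * phi (y - \<Delta>) - (1 - indicator {..\<Delta>/2} y) * phi y) \<partial>lborel)"
  proof (rule integral_mono)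
    show "integrable lborel (\<lambda>y. g y * phi (y - \<Delta>))" by (rule i1)
    show "integrable lborel (\<lambda>y. g y * phi y + ((1 - indicator {..\<Delta>/2} y) * phi (y - \<Delta>) - (1 - indicator {..\<Delta>/2} y) * phi y))"
      using i2 i3 i4 by simp
    fix y
    show "g y * phi (y - \<Delta>) \<le> g y * phi y + ((1 - indicator {..\<Delta>/2} y) * phi (y - \<Delta>) - (1 - indicator {..\<Delta>/2} y) * phi y)"
    proof (cases "y \<le> \<Delta>/2")
      case True
      have "y\<^sup>2 \<le> (y - \<Delta>)\<^sup>2" using True D by (simp add: power2_eq_square algebra_simps) (metis mult_left_mono mult_2 mult.commute D  add_le_cancel_left diff_ge_0_iff_ge order_refl order_trans  )
      then have "phi (y - \<Delta>) \<le> phi y" by (rule phi_cmp)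
      then show ?thesis using True g01[of y] by (simp add: mult_left_mono)
    next
      case False
      have "\<Delta> * \<Delta> \<le> \<Delta> * (y * 2)" using False D by (intro mult_left_mono) auto
      then have "(y - \<Delta>)\<^sup>2 \<le> y\<^sup>2" by (simp add: power2_eq_square algebra_simps)
      then have "phi y \<le> phi (y - \<Delta>)" by (rule phi_cmp)
      then have "g y * (phi (y - \<Delta>) - phi y) \<le> phi (y - \<Delta>) - phi y"
        using g01[of y] by (simp add: mult_left_le_one_le)
      then show ?thesis using False by (simp add: algebra_simps)
    qed
  qed
  also have "\<dots> = (\<integral>y. g y * phi y \<partial>lborel) + ((\<integral>y. (1 - indicator {..\<Delta>/2} y) * phi (y - \<Delta>) \<partial>lborel) - (\<integral>y. (1 - indicator {..\<Delta>/2} y) * phi y \<partial>lborel))"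
    using i2 i3 i4 by simp
  also have "(\<integral>y. (1 - indicator {..\<Delta>/2} y) * phi y \<partial>lborel) = 1 - Phi (\<Delta>/2)"
    by (simp add: one_minus_Phi)
  also have "(\<integral>y. (1 - indicator {..\<Delta>/2} y) * phi (y - \<Delta>) \<partial>lborel) = 1 - Phi (- \<Delta>/2)"
  proof -
    have "(\<integral>y. (1 - indicator {..\<Delta>/2} y) * phi (y - \<Delta>) \<partial>lborel)
       = (\<integral>x. (1 - indicator {..\<Delta>/2} (\<Delta> + 1 * x)) * phi (\<Delta> + 1 * x - \<Delta>) \<partial>lborel)"
      using lborel_integral_real_affine[of 1 "\<lambda>y. (1 - indicator {..\<Delta>/2} y) * phi (y - \<Delta>)" \<Delta>] by simp
    also have "\<dots> = (\<integral>x. (1 - indicator {..- \<Delta>/2} x) * phi x \<partial>lborel)"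
      by (rule Bochner_Integration.integral_cong) (auto simp: indicator_def)
    finally show ?thesis by (simp add: one_minus_Phi)
  qed
  finally have "(\<integral>y. g y * phi (y - \<Delta>) \<partial>lborel) \<le> (\<integral>y. g y * phi y \<partial>lborel) + (Phi (\<Delta>/2) - Phi (- \<Delta>/2))"
    by simp
  moreover have "Phi (\<Delta>/2) - Phi (- \<Delta>/2) \<le> \<Delta>/2 - (- \<Delta>/2)" by (rule Phi_lip) (use D in simp)
  ultimately show ?thesis using e1 by simp
qed

lemma AA_meas[measurable]: "AA p m \<in> borel_measurable borel"
  unfolding AA_def[abs_def] by simp

lemma compare:
  assumes p: "0 \<le> p" "p < 1" and q: "0 \<le> q" "q < 1" and B: "0 \<le> B" and K: "0 \<le> K"
    and D: "0 \<le> \<Delta>"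
    and cond: "B * \<bar>sqrt (1 - p) - sqrt (1 - q)\<bar> + K * \<bar>sqrt q - sqrt p\<bar> \<le> \<Delta> * sqrt q"
  shows "(\<integral>x. Phi (AA p m x) ^ n * phi x \<partial>lborel) \<le> (\<integral>x. Phi (AA q m x) ^ n * phi x \<partial>lborel)
           + \<Delta> + (Phi (- B) ^ n + (1 - Phi B ^ n)) + Phi (- K) + (1 - Phi K)"
proof -
  define c0 where "c0 = Phi (- B) ^ n + (1 - Phi B ^ n)"
  have c0: "0 \<le> c0" unfolding c0_def using Phi_pow_nonneg[of "-B" n] Phi_pow_le1[of B n] by linarith
  have ig: "integrable lborel (\<lambda>x. Phi (AA q m (x + \<Delta>)) ^ n * phi x)"
    by (rule int_bdd_phi) (auto simp: Phi_pow_le1 abs_le_iff intro: order_trans[OF _ Phi_pow_nonneg])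
  have if': "integrable lborel (\<lambda>x. Phi (AA p m x) ^ n * phi x)"
    by (rule int_bdd_phi) (auto simp: Phi_pow_le1 abs_le_iff intro: order_trans[OF _ Phi_pow_nonneg])
  have i1: "integrable lborel (\<lambda>x. indicator {..-K} x * phi x)" by (rule int_ind_phi) simp
  have i2: "integrable lborel (\<lambda>x. (1 - indicator {..K} x) * phi x)"
    by (rule int_bdd_phi) (auto simp: indicator_def)
  have i3: "integrable lborel (\<lambda>x. c0 * phi x)" using phi_int by simp
  have "(\<integral>x. Phi (AA p m x) ^ n * phi x \<partial>lborel) \<le>
     (\<integral>x. Phi (AA q m (x + \<Delta>)) ^ n * phi x + c0 * phi x + indicator {..-K} x * phi x + (1 - indicator {..K} x) * phi x \<partial>lborel)"
  proof (rule integral_mono[OF if'])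
    show "integrable lborel (\<lambda>x. Phi (AA q m (x + \<Delta>)) ^ n * phi x + c0 * phi x + indicator {..-K} x * phi x + (1 - indicator {..K} x) * phi x)"
      using ig i1 i2 i3 by simp
    fix x
    have "Phi (AA p m x) ^ n \<le> Phi (AA q m (x + \<Delta>)) ^ n + c0 + indicator {..-K} x + (1 - indicator {..K} x)"
    proof (cases "\<bar>x\<bar> \<le> K")
      case True
      then show ?thesis using pointwise[OF p q B True D cond, of m n] unfolding c0_def
        by (simp add: indicator_def)
    next
      case False
      then show ?thesis using c0 Phi_pow_nonneg[of "AA q m (x + \<Delta>)" n] Phi_pow_le1[of "AA p m x" n]
        by (auto simp: indicator_def)
    qed
    then show "Phi (AA p m x) ^ n * phi x \<le> Phi (AA q m (x + \<Delta>)) ^ n * phi x + c0 * phi x + indicator {..-K} x * phi x + (1 - indicator {..K} x) * phi x"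
      using phi_nonneg[of x] by (metis distrib_right mult_right_mono)
  qed
  also have "\<dots> = (\<integral>x. Phi (AA q m (x + \<Delta>)) ^ n * phi x \<partial>lborel) + c0 + Phi (- K) + (1 - Phi K)"
    using ig i1 i2 i3 by (simp add: phi_total Phi_alt[symmetric] one_minus_Phi[symmetric])
  also have "(\<integral>x. Phi (AA q m (x + \<Delta>)) ^ n * phi x \<partial>lborel) \<le> (\<integral>x. Phi (AA q m x) ^ n * phi x \<partial>lborel) + \<Delta>"
    by (rule shift[OF D, of "\<lambda>x. Phi (AA q m x) ^ n", simplified]) (auto simp: Phi_pow_le1 Phi_pow_nonneg)
  finally show ?thesis unfolding c0_def by simp
qed

lemma tailsB:
  assumes n: "1 \<le> n"
  shows "Phi (- (2 * sqrt (2 * ln (real n)))) ^ n + (1 - Phi (2 * sqrt (2 * ln (real n))) ^ n) \<le> 2 / real n"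
proof -
  define B where "B = 2 * sqrt (2 * ln (real n))"
  have ln0: "0 \<le> ln (real n)" using n by simp
  have B0: "0 \<le> B" using ln0 by (simp add: B_def)
  have "B\<^sup>2 / 2 = 4 * ln (real n)" using ln0 by (simp add: B_def power_mult_distrib)
  then have e1: "exp (- B\<^sup>2 / 2) = exp (- (4 * ln (real n)))" by simp
  have e2: "exp (4 * ln (real n)) = real n ^ 4"
    using n exp_of_nat_mult[of 4 "ln (real n)"] by simp
  have eB: "exp (- B\<^sup>2 / 2) = 1 / real n ^ 4" unfolding e1 exp_minus e2 by (simp add: field_simps)
  have "real n ^ 2 \<le> real n ^ 4" using n by (intro power_increasing) auto
  then have n4: "real n * (1 / real n ^ 4) \<le> 1 / real n" using n
    by (simp add: field_simps power2_eq_square)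
  have t1: "Phi (- B) ^ n \<le> 1 / real n ^ 4"
  proof -
    have "Phi (- B) ^ n \<le> Phi (- B)" using n Phi_nonneg Phi_le1 by (simp add: power_le_one power_decreasing[of 1 n, simplified])
    also have "\<dots> \<le> 1 / real n ^ 4" using tail_low[OF B0] eB by simp
    finally show ?thesis .
  qed
  have t2: "1 - Phi B ^ n \<le> real n * (1 / real n ^ 4)"
  proof -
    have "1 - Phi B ^ n \<le> real n * (1 - Phi B)" by (rule bernoulli_aux) (auto simp: Phi_nonneg Phi_le1)
    also have "\<dots> \<le> real n * (1 / real n ^ 4)" using tail_up[OF B0] eB by (intro mult_left_mono) auto
    finally show ?thesis .
  qed
  have "1 / real n ^ 4 \<le> 1 / real n" using n by (simp add: field_simps) (metis n of_nat_1 of_nat_le_iff self_le_power zero_less_numeral One_nat_def le_numeral_extra(4) of_nat_le_iff)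
  then show ?thesis using t1 t2 n4 unfolding B_def[symmetric] by linarith
qed

lemma tailsK:
  assumes e: "0 < e"
  shows "Phi (- (2 + 16 / e)) + (1 - Phi (2 + 16 / e)) \<le> e / 8"
proof -
  define K where "K = 2 + 16 / e"
  have K2: "2 \<le> K" using e by (simp add: K_def)
  have "2 * K \<le> K * K" using K2 by (intro mult_right_mono) auto
  then have "K \<le> K\<^sup>2 / 2" by (simp add: power2_eq_square)
  also have "K\<^sup>2 / 2 \<le> exp (K\<^sup>2 / 2)" using exp_ge_add_one_self[of "K\<^sup>2 / 2"] by linarith
  finally have "16 / e \<le> exp (K\<^sup>2 / 2)" by (simp add: K_def)
  then have "exp (- K\<^sup>2 / 2) \<le> e / 16" using e by (simp add: exp_minus field_simps)
  moreover have "0 \<le> K" using K2 by simp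
  ultimately show ?thesis using tail_low[of K] tail_up[of K] unfolding K_def[symmetric] by linarith
qed

definition etaf :: "real \<Rightarrow> real \<Rightarrow> real" where
  "etaf \<rho> e = min (\<rho> / 4) ((e / 8) * sqrt (\<rho> / 2) / (2 + 2 * (2 + 16 / e) / sqrt (\<rho> / 2)))"

lemma etaf_pos: "0 < \<rho> \<Longrightarrow> 0 < e \<Longrightarrow> 0 < etaf \<rho> e"
  unfolding etaf_def by (auto intro!: divide_pos_pos add_pos_nonneg)

lemma det:
  assumes rho: "0 < \<rho>" "\<rho> < 1" and r: "0 \<le> r" "r < 1" and e: "0 < e"
    and n3: "3 \<le> n" and ne: "16 / e \<le> real n"
    and small: "\<bar>sqrt (2 * ln (real n)) * (sqrt (1 - \<rho>) - sqrt (1 - r))\<bar> \<le> etaf \<rho> e"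
  shows "\<bar>(\<integral>x. Phi (AA \<rho> m x) ^ n * phi x \<partial>lborel) - (\<integral>x. Phi (AA r m x) ^ n * phi x \<partial>lborel)\<bar> \<le> 3 * e / 8"
proof -
  define c where "c = sqrt (2 * ln (real n))"
  define \<eta> where "\<eta> = etaf \<rho> e"
  define K where "K = 2 + 16 / e"
  define s0 where "s0 = sqrt (\<rho> / 2)"
  define t where "t = sqrt (1 - \<rho>)"
  define s where "s = sqrt (1 - r)"
  define \<Delta> where "\<Delta> = e / 8"
  have s0: "0 < s0" using rho by (simp add: s0_def)
  have K0: "0 \<le> K" using e by (simp add: K_def)
  have "ln 3 \<le> ln (real n)" using n3 by simp
  then have "1 \<le> ln (real n)" using ln3_gt_1 by linarith
  then have c1: "1 \<le> c" unfolding c_def by (simp add: real_le_rsqrt)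
  have ct: "c * \<bar>t - s\<bar> \<le> \<eta>" using small c1 by (simp add: c_def t_def s_def \<eta>_def abs_mult)
  have "\<bar>t - s\<bar> \<le> c * \<bar>t - s\<bar>" using mult_right_mono[OF c1 abs_ge_zero, of "t - s"] by simp
  then have ts: "\<bar>t - s\<bar> \<le> \<eta>" using ct by linarith
  have \<eta>1: "\<eta> \<le> \<rho> / 4" unfolding \<eta>_def etaf_def by (rule min.cobounded1)
  have \<eta>2: "\<eta> * (2 + 2 * K / s0) \<le> \<Delta> * s0"
  proof -
    have pos: "0 < 2 + 2 * K / s0" using K0 s0 by (simp add: add_pos_nonneg)
    have "\<eta> \<le> \<Delta> * s0 / (2 + 2 * K / s0)" by (simp add: \<eta>_def etaf_def K_def s0_def \<Delta>_def)
    then show ?thesis using pos by (simp add: le_divide_eq)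
  qed
  have t01: "0 \<le> t" "t \<le> 1" using rho by (auto simp: t_def)
  have s01: "0 \<le> s" "s \<le> 1" using r by (auto simp: s_def)
  have "r - \<rho> = t\<^sup>2 - s\<^sup>2" using rho r by (simp add: t_def s_def)
  also have "\<dots> = (t - s) * (t + s)" by (simp add: power2_eq_square algebra_simps)
  finally have "\<bar>r - \<rho>\<bar> = \<bar>t - s\<bar> * (t + s)" using t01 s01 by (simp add: abs_mult)
  also have "\<dots> \<le> \<bar>t - s\<bar> * 2" using t01 s01 by (intro mult_left_mono) auto
  also have "\<dots> = 2 * \<bar>t - s\<bar>" by simp
  finally have rr0: "\<bar>r - \<rho>\<bar> \<le> 2 * \<bar>t - s\<bar>" .
  have rr: "\<bar>r - \<rho>\<bar> \<le> 2 * \<eta>" using order_trans[OF rr0 mult_left_mono[OF ts, of 2]] by simp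
  then have "\<rho> / 2 \<le> r" using \<eta>1 by linarith
  then have sr: "s0 \<le> sqrt r" by (simp add: s0_def)
  have srho: "s0 \<le> sqrt \<rho>" using rho by (simp add: s0_def)
  have "(sqrt r - sqrt \<rho>) * (sqrt r + sqrt \<rho>) = r - \<rho>" using r rho by (simp add: algebra_simps)
  moreover have "\<bar>sqrt r - sqrt \<rho>\<bar> * (sqrt r + sqrt \<rho>) = \<bar>(sqrt r - sqrt \<rho>) * (sqrt r + sqrt \<rho>)\<bar>"
    using r rho by (simp add: abs_mult)
  ultimately have "\<bar>sqrt r - sqrt \<rho>\<bar> * (sqrt r + sqrt \<rho>) = \<bar>r - \<rho>\<bar>" by simp
  moreover have "\<bar>sqrt r - sqrt \<rho>\<bar> * s0 \<le> \<bar>sqrt r - sqrt \<rho>\<bar> * (sqrt r + sqrt \<rho>)"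
  proof (rule mult_left_mono)
    have "0 \<le> sqrt \<rho>" using rho by simp
    then show "s0 \<le> sqrt r + sqrt \<rho>" using sr by linarith
  qed simp
  ultimately have "\<bar>sqrt r - sqrt \<rho>\<bar> * s0 \<le> 2 * \<eta>" using rr by linarith
  then have sq: "\<bar>sqrt r - sqrt \<rho>\<bar> \<le> 2 * \<eta> / s0" using s0 by (simp add: le_divide_eq)
  define B where "B = 2 * c"
  have B0: "0 \<le> B" using c1 by (simp add: B_def)
  have bound: "B * \<bar>t - s\<bar> + K * \<bar>sqrt r - sqrt \<rho>\<bar> \<le> \<Delta> * s0"
  proof -
    have "B * \<bar>t - s\<bar> \<le> 2 * \<eta>" using ct by (simp add: B_def)
    moreover have "K * \<bar>sqrt r - sqrt \<rho>\<bar> \<le> K * (2 * \<eta> / s0)" using sq K0 by (rule mult_left_mono)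
    ultimately have "B * \<bar>t - s\<bar> + K * \<bar>sqrt r - sqrt \<rho>\<bar> \<le> \<eta> * (2 + 2 * K / s0)"
      by (simp add: algebra_simps)
    then show ?thesis using \<eta>2 by linarith
  qed
  have D0: "0 \<le> \<Delta>" using e by (simp add: \<Delta>_def)
  have c1': "B * \<bar>sqrt (1 - \<rho>) - sqrt (1 - r)\<bar> + K * \<bar>sqrt r - sqrt \<rho>\<bar> \<le> \<Delta> * sqrt r"
    using bound mult_left_mono[OF sr D0] by (simp add: t_def s_def)
  have c2': "B * \<bar>sqrt (1 - r) - sqrt (1 - \<rho>)\<bar> + K * \<bar>sqrt \<rho> - sqrt r\<bar> \<le> \<Delta> * sqrt \<rho>"
    using bound mult_left_mono[OF srho D0] by (simp add: t_def s_def abs_minus_commute)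
  have n1: "1 \<le> n" using n3 by simp
  have tb: "Phi (- B) ^ n + (1 - Phi B ^ n) \<le> 2 / real n" using tailsB[OF n1] by (simp add: B_def c_def)
  have "2 / real n \<le> e / 8" using ne e n3 by (simp add: field_simps)
  then have tb': "Phi (- B) ^ n + (1 - Phi B ^ n) \<le> e / 8" using tb by linarith
  have tk: "Phi (- K) + (1 - Phi K) \<le> e / 8" using tailsK[OF e] by (simp add: K_def)
  have le1: "(\<integral>x. Phi (AA \<rho> m x) ^ n * phi x \<partial>lborel) \<le> (\<integral>x. Phi (AA r m x) ^ n * phi x \<partial>lborel)
           + \<Delta> + (Phi (- B) ^ n + (1 - Phi B ^ n)) + Phi (- K) + (1 - Phi K)"
    using rho r by (intro compare[OF _ _ _ _ B0 K0 D0 c1']) auto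
  have le2: "(\<integral>x. Phi (AA r m x) ^ n * phi x \<partial>lborel) \<le> (\<integral>x. Phi (AA \<rho> m x) ^ n * phi x \<partial>lborel)
           + \<Delta> + (Phi (- B) ^ n + (1 - Phi B ^ n)) + Phi (- K) + (1 - Phi K)"
    using rho r by (intro compare[OF _ _ _ _ B0 K0 D0 c2']) auto
  have a1: "(\<integral>x. Phi (AA \<rho> m x) ^ n * phi x \<partial>lborel) - (\<integral>x. Phi (AA r m x) ^ n * phi x \<partial>lborel) \<le> 3 * e / 8"
    using le1 tb' tk unfolding \<Delta>_def by linarith
  have a2: "- ((\<integral>x. Phi (AA \<rho> m x) ^ n * phi x \<partial>lborel) - (\<integral>x. Phi (AA r m x) ^ n * phi x \<partial>lborel)) \<le> 3 * e / 8"
    using le2 tb' tk unfolding \<Delta>_def by linarith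
  show ?thesis using a1 a2 by (rule abs_leI)
qed

lemma H_diff:
  assumes "0 \<le> p" "p < 1" "0 \<le> q" "q < 1"
  shows "(\<integral>x. ((Phi ((x * sqrt p + m) / sqrt (1 - p))) ^ n
                      - (Phi ((x * sqrt q + m) / sqrt (1 - q))) ^ n) * phi x \<partial>lborel)
     = (\<integral>x. Phi (AA p m x) ^ n * phi x \<partial>lborel) - (\<integral>x. Phi (AA q m x) ^ n * phi x \<partial>lborel)"
proof -
  have i: "integrable lborel (\<lambda>x. Phi (AA p m x) ^ n * phi x)" for p
    by (rule int_bdd_phi) (auto simp: Phi_pow_le1 abs_le_iff intro: order_trans[OF _ Phi_pow_nonneg])
  have eq: "((Phi ((x * sqrt p + m) / sqrt (1 - p))) ^ n
                      - (Phi ((x * sqrt q + m) / sqrt (1 - q))) ^ n) * phi x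
     = Phi (AA p m x) ^ n * phi x - Phi (AA q m x) ^ n * phi x" for x
    by (simp add: AA_def left_diff_distrib)
  show ?thesis unfolding eq
    by (rule Bochner_Integration.integral_diff[OF i i])
qed

theorem theorem3:
  fixes \<rho> :: real
    and M :: "nat \<Rightarrow> 'a measure"
    and X :: "nat \<Rightarrow> nat \<Rightarrow> 'a \<Rightarrow> real"
    and \<rho>hat :: "nat \<Rightarrow> 'a \<Rightarrow> real"
  assumes rho: "0 < \<rho>" "\<rho> < 1"
    and prob: "\<And>n. prob_space (M n)"
    and X_rv: "\<And>n i. i < n \<Longrightarrow> X n i \<in> borel_measurable (M n)"
    and X_normal: "\<And>n. jointly_normal (M n) n (X n)"
    and X_mean: "\<And>n i. i < n \<Longrightarrow> integrable (M n) (X n i) \<and> (\<integral>\<omega>. X n i \<omega> \<partial>M n) = 0"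
    and X_var: "\<And>n i. i < n \<Longrightarrow> integrable (M n) (\<lambda>\<omega>. (X n i \<omega>)\<^sup>2) \<and> (\<integral>\<omega>. (X n i \<omega>)\<^sup>2 \<partial>M n) = 1"
    and X_corr: "\<And>n i j. i < n \<Longrightarrow> j < n \<Longrightarrow> i \<noteq> j \<Longrightarrow>
                   integrable (M n) (\<lambda>\<omega>. X n i \<omega> * X n j \<omega>) \<and> (\<integral>\<omega>. X n i \<omega> * X n j \<omega> \<partial>M n) = \<rho>"
    and est_meas: "\<And>n. \<exists>g. g \<in> borel_measurable (PiM {..<n} (\<lambda>_. borel)) \<and>
                     (\<forall>\<omega>\<in>space (M n). \<rho>hat n \<omega> = g (\<lambda>i\<in>{..<n}. X n i \<omega>))"
    and est_range: "\<And>n \<omega>. \<omega> \<in> space (M n) \<Longrightarrow> 0 \<le> \<rho>hat n \<omega> \<and> \<rho>hat n \<omega> < 1"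
    and est_consistent: "conv_prob_zero M
          (\<lambda>n \<omega>. sqrt (2 * ln (real n)) * (sqrt (1 - \<rho>) - sqrt (1 - \<rho>hat n \<omega>)))"
  shows "conv_prob_zero M
          (\<lambda>n \<omega>. \<bar>\<integral>x. ((Phi ((x * sqrt \<rho> + Max {X n i \<omega> | i. i < n}) / sqrt (1 - \<rho>))) ^ n
                      - (Phi ((x * sqrt (\<rho>hat n \<omega>) + Max {X n i \<omega> | i. i < n}) / sqrt (1 - \<rho>hat n \<omega>))) ^ n)
                     * phi x \<partial>lborel\<bar>)"
proof -
  define Dn where "Dn = (\<lambda>n \<omega>. \<bar>\<integral>x. ((Phi ((x * sqrt \<rho> + Max {X n i \<omega> | i. i < n}) / sqrt (1 - \<rho>))) ^ n
                      - (Phi ((x * sqrt (\<rho>hat n \<omega>) + Max {X n i \<omega> | i. i < n}) / sqrt (1 - \<rho>hat n \<omega>))) ^ n)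
                     * phi x \<partial>lborel\<bar>)"
  have main: "\<forall>e>0. (\<lambda>n. measure (M n) {\<omega> \<in> space (M n). \<bar>Dn n \<omega>\<bar> > e}) \<longlonglongrightarrow> 0"
  proof (intro allI impI)
  fix e :: real
  assume e: "0 < e"
  define cons where "cons = (\<lambda>n \<omega>. sqrt (2 * ln (real n)) * (sqrt (1 - \<rho>) - sqrt (1 - \<rho>hat n \<omega>)))"
  define \<eta> where "\<eta> = etaf \<rho> e"
  have \<eta>0: "0 < \<eta>" using etaf_pos[OF rho(1) e] by (simp add: \<eta>_def)
  have lim: "(\<lambda>n. measure (M n) {\<omega> \<in> space (M n). \<eta> < \<bar>cons n \<omega>\<bar>}) \<longlonglongrightarrow> 0"
    using est_consistent \<eta>0 unfolding conv_prob_zero_def cons_def by blast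
  have meas_hat: "\<rho>hat n \<in> borel_measurable (M n)" for n
  proof -
    obtain g where g: "g \<in> borel_measurable (PiM {..<n} (\<lambda>_. borel))"
      and eq: "\<forall>\<omega>\<in>space (M n). \<rho>hat n \<omega> = g (\<lambda>i\<in>{..<n}. X n i \<omega>)"
      using est_meas[of n] by blast
    have "(\<lambda>\<omega>. \<lambda>i\<in>{..<n}. X n i \<omega>) \<in> measurable (M n) (PiM {..<n} (\<lambda>_. borel))"
      by (rule measurable_restrict) (use X_rv in auto)
    then have "(\<lambda>\<omega>. g (\<lambda>i\<in>{..<n}. X n i \<omega>)) \<in> borel_measurable (M n)"
      using g by (rule measurable_compose)
    then show ?thesis using eq by (subst measurable_cong) auto
  qed
  have Sset: "{\<omega> \<in> space (M n). \<eta> < \<bar>cons n \<omega>\<bar>} \<in> sets (M n)" for n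
  proof -
    have h: "(\<lambda>y. \<bar>sqrt (2 * ln (real n)) * (sqrt (1 - \<rho>) - sqrt (1 - y))\<bar>) \<in> borel_measurable borel"
      by (intro borel_measurable_continuous_onI continuous_intros)
    have "(\<lambda>\<omega>. \<bar>cons n \<omega>\<bar>) \<in> borel_measurable (M n)"
      using measurable_compose[OF meas_hat[of n] h] by (simp add: cons_def)
    then show ?thesis by (intro borel_measurable_less) auto
  qed
  define N where "N = max 3 (nat \<lceil>16 / e\<rceil>)"
  have bound: "measure (M n) {\<omega> \<in> space (M n). e < Dn n \<omega>} \<le> measure (M n) {\<omega> \<in> space (M n). \<eta> < \<bar>cons n \<omega>\<bar>}"
    if n: "N \<le> n" for n
  proof -
    interpret P: prob_space "M n" by (rule prob)
    have n3: "3 \<le> n" using n by (simp add: N_def)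
    have ne: "16 / e \<le> real n"
    proof -
      have "16 / e \<le> real (nat \<lceil>16 / e\<rceil>)" by linarith
      also have "\<dots> \<le> real n" using n by (simp add: N_def)
      finally show ?thesis .
    qed
    have sub: "{\<omega> \<in> space (M n). e < Dn n \<omega>} \<subseteq> {\<omega> \<in> space (M n). \<eta> < \<bar>cons n \<omega>\<bar>}"
    proof safe
      fix \<omega> assume w: "\<omega> \<in> space (M n)" and eD: "e < Dn n \<omega>"
      show "\<eta> < \<bar>cons n \<omega>\<bar>"
      proof (rule ccontr)
        assume "\<not> \<eta> < \<bar>cons n \<omega>\<bar>"
        then have sm: "\<bar>cons n \<omega>\<bar> \<le> etaf \<rho> e" by (simp add: \<eta>_def)
        have r: "0 \<le> \<rho>hat n \<omega>" "\<rho>hat n \<omega> < 1" using est_range[OF w] by auto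
        have "Dn n \<omega> \<le> 3 * e / 8"
          unfolding Dn_def H_diff[OF less_imp_le[OF rho(1)] rho(2) r]
          by (rule det[OF rho r e n3 ne]) (use sm in \<open>simp add: cons_def\<close>)
        then show False using eD e by linarith
      qed
    qed
    show ?thesis
    proof (cases "{\<omega> \<in> space (M n). e < Dn n \<omega>} \<in> sets (M n)")
      case True
      then show ?thesis using sub Sset[of n] by (intro P.finite_measure_mono) auto
    next
      case False
      then show ?thesis by (simp add: measure_notin_sets)
    qed
  qed
  have "(\<lambda>n. measure (M n) {\<omega> \<in> space (M n). e < Dn n \<omega>}) \<longlonglongrightarrow> 0"
  proof (rule tendsto_sandwich[OF _ _ tendsto_const lim])
    show "\<forall>\<^sub>F n in sequentially. 0 \<le> measure (M n) {\<omega> \<in> space (M n). e < Dn n \<omega>}" by simp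
    show "\<forall>\<^sub>F n in sequentially. measure (M n) {\<omega> \<in> space (M n). e < Dn n \<omega>} \<le> measure (M n) {\<omega> \<in> space (M n). \<eta> < \<bar>cons n \<omega>\<bar>}"
      using bound by (intro eventually_sequentiallyI[of N]) auto
  qed
  moreover have "\<bar>Dn n \<omega>\<bar> = Dn n \<omega>" for n \<omega> by (simp add: Dn_def)
  ultimately show "(\<lambda>n. measure (M n) {\<omega> \<in> space (M n). \<bar>Dn n \<omega>\<bar> > e}) \<longlonglongrightarrow> 0" by simp
  qed
  then show ?thesis unfolding conv_prob_zero_def Dn_def .
qed

end
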